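(* Let $p,q,r\in\mathbb{Z}_{\ge 0}$ with $p+q>0$, $p+r>1$, $q+r>1$ and $p+q+r>2$. Then $$R(p,q,r)=\sum_{a=0}^{p-1}\binom{q+a-1}{a}\,\zeta(\overline{r+q+a},\overline{p-a})+\sum_{b=0}^{q-1}\binom{p+b-1}{b}\,\zeta(r+p+b,\overline{q-b}),$$ $$S(p,q,r)=\sum_{a=0}^{p-1}\binom{q+a-1}{a}\,\zeta(\overline{r+q+a},p-a)+\sum_{b=0}^{q-1}\binom{p+b-1}{b}\,\zeta(\overline{r+p+b},q-b).$$
   Context: Define $$R(p,q,r):=\sum_{m,n=1}^\infty\frac{(-1)^n}{m^p n^q (m+n)^r},\qquad S(p,q,r):=\sum_{m,n=1}^\infty\frac{(-1)^{m+n}}{m^p n^q (m+n)^r}.$$ For positive integers $s,t$ define the alternating double zeta values $$\zeta(\overline{s},\overline{t}):=\sum_{m>n\ge1}\frac{(-1)^{m+n}}{m^s n^t},\quad \zeta(\overline{s},t):=\sum_{m>n\ge1}\frac{(-1)^{m}}{m^s n^t},\quad \zeta(s,\overline{t}):=\sum_{m>n\ge1}\frac{(-1)^{n}}{m^s n^t}.$$ Empty sums are $0$; $\binom{-1}{0}=1$. *)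

theory Defs
  imports "HOL-Analysis.Analysis"
begin

text \<open>Tornheim-type alternating double sums over m,n >= 1 (as unordered sums over
  the index set of pairs; absolutely convergent under the theorem's hypotheses).\<close>

definition R :: "nat \<Rightarrow> nat \<Rightarrow> nat \<Rightarrow> real" where
  "R p q r = (\<Sum>\<^sub>\<infinity>(m,n)\<in>{1..}\<times>{1..}.
      (-1) ^ n / (real m ^ p * real n ^ q * real (m + n) ^ r))"

definition S :: "nat \<Rightarrow> nat \<Rightarrow> nat \<Rightarrow> real" where
  "S p q r = (\<Sum>\<^sub>\<infinity>(m,n)\<in>{1..}\<times>{1..}.
      (-1) ^ (m + n) / (real m ^ p * real n ^ q * real (m + n) ^ r))"

definition zeta_bb :: "nat \<Rightarrow> nat \<Rightarrow> real" where
  "zeta_bb s t = (\<Sum>\<^sub>\<infinity>(m,n)\<in>{(m,n). m > n \<and> n \<ge> 1}.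
      (-1) ^ (m + n) / (real m ^ s * real n ^ t))"

definition zeta_bu :: "nat \<Rightarrow> nat \<Rightarrow> real" where
  "zeta_bu s t = (\<Sum>\<^sub>\<infinity>(m,n)\<in>{(m,n). m > n \<and> n \<ge> 1}.
      (-1) ^ m / (real m ^ s * real n ^ t))"

definition zeta_ub :: "nat \<Rightarrow> nat \<Rightarrow> real" where
  "zeta_ub s t = (\<Sum>\<^sub>\<infinity>(m,n)\<in>{(m,n). m > n \<and> n \<ge> 1}.
      (-1) ^ n / (real m ^ s * real n ^ t))"

end

theory Submission
  imports Defs
begin



definition PA :: "real \<Rightarrow> real \<Rightarrow> nat \<Rightarrow> nat \<Rightarrow> real" where
  "PA x z p q = (\<Sum>a<p. real ((q + a - 1) choose a) * x ^ (p - a) * z ^ (q + a))"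

lemma PA_0: "PA x z 0 q = 0" by (simp add: PA_def)

lemma PA_q0: "p > 0 \<Longrightarrow> PA x z p 0 = x ^ p"
proof -
  assume "p > 0" then obtain p' where p: "p = Suc p'" by (cases p) auto
  have "PA x z p 0 = (\<Sum>a<Suc p'. real ((a - 1) choose a) * x ^ (Suc p' - a) * z ^ a)"
    by (simp add: PA_def p)
  also have "\<dots> = x ^ Suc p' + (\<Sum>a<p'. real ((Suc a - 1) choose Suc a) * x ^ (Suc p' - Suc a) * z ^ Suc a)"
    by (subst sum.lessThan_Suc_shift) simp
  also have "\<dots> = x ^ p" by (simp add: p binomial_eq_0)
  finally show ?thesis .
qed

lemma PA_step: "PA x z (Suc p) (Suc q) = z * PA x z (Suc p) q + z * PA x z p (Suc q)"
proof -
  have "PA x z (Suc p) (Suc q) = x ^ Suc p * z ^ Suc q +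
     (\<Sum>a<p. real ((q + Suc a) choose Suc a) * x ^ (p - a) * z ^ (Suc q + Suc a))"
    unfolding PA_def by (subst sum.lessThan_Suc_shift) simp
  also have "\<dots> = x ^ Suc p * z ^ Suc q +
     (\<Sum>a<p. real ((q + a) choose Suc a) * x ^ (p - a) * z ^ (Suc q + Suc a)) +
     (\<Sum>a<p. real ((q + a) choose a) * x ^ (p - a) * z ^ (Suc q + Suc a))"
    by (simp add: sum.distrib[symmetric] algebra_simps)
  moreover have "z * PA x z (Suc p) q = x ^ Suc p * z ^ Suc q +
     (\<Sum>a<p. real ((q + a) choose Suc a) * x ^ (p - a) * z ^ (Suc q + Suc a))"
    unfolding PA_def by (subst sum.lessThan_Suc_shift) (simp add: sum_distrib_left algebra_simps)
  moreover have "z * PA x z p (Suc q) = (\<Sum>a<p. real ((q + a) choose a) * x ^ (p - a) * z ^ (Suc q + Suc a))"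
    unfolding PA_def by (simp add: sum_distrib_left algebra_simps)
  ultimately show ?thesis by simp
qed

lemma partial_frac:
  fixes x y z :: real
  assumes h: "x * y = z * (x + y)"
  shows "p + q > 0 \<Longrightarrow> x ^ p * y ^ q = PA x z p q + PA y z q p"
proof (induction "p + q" arbitrary: p q rule: less_induct)
  case less
  show ?case
  proof (cases "p = 0 \<or> q = 0")
    case True
    then show ?thesis using less.prems by (auto simp: PA_0 PA_q0)
  next
    case False
    then obtain p' q' where pq: "p = Suc p'" "q = Suc q'" by (meson not0_implies_Suc)
    have "x ^ p * y ^ q = z * (x ^ p * y ^ q') + z * (x ^ p' * y ^ q)"
    proof -
      have "x ^ p * y ^ q = x ^ p' * y ^ q' * (x * y)" by (simp add: pq algebra_simps)
      also have "\<dots> = x ^ p' * y ^ q' * (z * (x + y))" by (simp add: h)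
      finally show ?thesis by (simp add: pq algebra_simps)
    qed
    also have "x ^ p * y ^ q' = PA x z p q' + PA y z q' p"
      using less.hyps[of p q'] pq by simp
    also have "x ^ p' * y ^ q = PA x z p' q + PA y z q p'"
      using less.hyps[of p' q] pq by simp
    finally show ?thesis using PA_step[of x z p' q'] PA_step[of y z q' p'] pq
      by (simp add: algebra_simps)
  qed
qed




lemma d_summable: "(\<lambda>n::nat. real n powr -(3/2)) summable_on UNIV"
  by (subst summable_on_UNIV_nonneg_real_iff) (auto simp: summable_real_powr_iff)

lemma pow32_summable:
  "(\<lambda>(M::nat,m::nat). real M powr -(3/2) * real m powr -(3/2)) summable_on (UNIV \<times> UNIV)"
proof (rule summable_on_SigmaI[where g = "\<lambda>M. real M powr -(3/2) * infsum (\<lambda>n::nat. real n powr -(3/2)) UNIV"])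
  fix M :: nat
  show "((\<lambda>y. case (M, y) of (M, m) \<Rightarrow> real M powr - (3 / 2) * real m powr - (3 / 2)) has_sum
          real M powr - (3 / 2) * infsum (\<lambda>n::nat. real n powr -(3/2)) UNIV) UNIV"
    using has_sum_cmult_right[OF has_sum_infsum[OF d_summable]] by simp
next
  show "(\<lambda>M::nat. real M powr - (3 / 2) * infsum (\<lambda>n::nat. real n powr -(3/2)) UNIV) summable_on UNIV"
    by (rule summable_on_cmult_left[OF d_summable])
qed auto

lemma bound:
  fixes M m s t :: nat and e :: real
  assumes "m < M" "1 \<le> m" "2 \<le> s" "1 \<le> t" "\<bar>e\<bar> \<le> 1"
  shows "\<bar>e / (real M ^ s * real m ^ t)\<bar> \<le> real M powr -(3/2) * real m powr -(3/2)"
proof -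
  have m1: "real m \<ge> 1" and M1: "real M \<ge> 1" and mM: "real m \<le> real M" using assms by auto
  have 1: "real M ^ 2 * real m \<le> real M ^ s * real m ^ t"
  proof (rule mult_mono)
    show "real M ^ 2 \<le> real M ^ s" using assms M1 by (intro power_increasing) auto
    show "real m \<le> real m ^ t" using m1 assms power_increasing[of 1 t "real m"] by simp
  qed auto
  have 2: "real M powr (3/2) * real m powr (3/2) \<le> real M ^ 2 * real m"
  proof -
    have "real M powr (3/2) * real m powr (3/2) = real M powr (3/2) * real m powr (1/2) * real m"
    proof -
      have "real m powr (3/2) = real m powr (1/2 + 1)" by simp
      also have "\<dots> = real m powr (1/2) * real m powr 1" by (rule powr_add)
      also have "\<dots> = real m powr (1/2) * real m" by simp
      finally have e: "real m powr (3/2) = real m powr (1/2) * real m" .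
      show ?thesis unfolding e by (rule mult.assoc[symmetric])
    qed
    also have "\<dots> \<le> real M powr (3/2) * real M powr (1/2) * real m"
      using m1 mM by (intro mult_right_mono mult_left_mono powr_mono2) auto
    also have "\<dots> = real M ^ 2 * real m"
    proof -
      have "real M powr (3/2) * real M powr (1/2) = real M powr (3/2 + 1/2)" by (rule powr_add[symmetric])
      also have "\<dots> = real M powr (real 2)" by simp
      also have "\<dots> = real M ^ 2" by (rule powr_realpow) (use M1 in simp)
      finally have e2: "real M powr (3/2) * real M powr (1/2) = real M ^ 2" .
      show ?thesis unfolding e2 by (rule refl)
    qed
    finally show ?thesis .
  qed
  have pos: "0 < real M powr (3/2) * real m powr (3/2)" using m1 M1 by simp
  have "\<bar>e / (real M ^ s * real m ^ t)\<bar> = \<bar>e\<bar> / (real M ^ s * real m ^ t)"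
    using m1 M1 by (simp add: abs_divide)
  also have "\<dots> \<le> 1 / (real M ^ s * real m ^ t)"
    using m1 M1 assms by (intro divide_right_mono) auto
  also have "\<dots> \<le> 1 / (real M powr (3/2) * real m powr (3/2))"
    using 1 2 pos by (intro divide_left_mono) auto
  also have "\<dots> = real M powr -(3/2) * real m powr -(3/2)"
    by (simp only: powr_minus inverse_eq_divide) simp
  finally show ?thesis .
qed


lemma Z_summable:
  fixes s t :: nat and e :: "nat \<Rightarrow> nat \<Rightarrow> real"
  assumes "2 \<le> s" "1 \<le> t" "\<And>M m. \<bar>e M m\<bar> \<le> 1"
  shows "(\<lambda>(M,m). e M m / (real M ^ s * real m ^ t)) summable_on {(M,m). m < M \<and> 1 \<le> m}"
proof -
  have "(\<lambda>(M::nat,m::nat). real M powr -(3/2) * real m powr -(3/2)) summable_on {(M,m). m < M \<and> 1 \<le> m}"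
    by (rule summable_on_subset[OF pow32_summable]) auto
  then have "(\<lambda>x. norm ((\<lambda>(M::nat,m::nat). real M powr -(3/2) * real m powr -(3/2)) x)) summable_on ({(M,m). m < M \<and> 1 \<le> m})"
    by (rule summable_on_iff_abs_summable_on_real[THEN iffD1])
  then have "(\<lambda>x. norm ((\<lambda>(M,m). e M m / (real M ^ s * real m ^ t)) x)) summable_on ({(M,m). m < M \<and> 1 \<le> m})"
  proof (rule Infinite_Sum.abs_summable_on_comparison_test)
    fix x assume "x \<in> {(M::nat,m::nat). m < M \<and> 1 \<le> m}"
    then obtain M m where x: "x = (M,m)" "m < M" "1 \<le> m" by auto
    have "\<bar>e M m / (real M ^ s * real m ^ t)\<bar> \<le> real M powr -(3/2) * real m powr -(3/2)"
      by (rule bound) (use x assms in auto)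
    then show "norm ((\<lambda>(M,m). e M m / (real M ^ s * real m ^ t)) x) \<le> norm ((\<lambda>(M::nat,m::nat). real M powr -(3/2) * real m powr -(3/2)) x)"
      using x by simp
  qed
  then show ?thesis by (rule abs_summable_summable)
qed




abbreviation "DD \<equiv> ({1..} \<times> {1..} :: (nat \<times> nat) set)"
abbreviation "ZZ \<equiv> {(M::nat,m::nat). m < M \<and> 1 \<le> m}"

lemma bij1: "bij_betw (\<lambda>(m,n). (m+n, m)) DD ZZ"
  by (rule bij_betw_byWitness[where f' = "\<lambda>(M,m). (m, M - m)"]) auto

lemma bij2: "bij_betw (\<lambda>(m,n). (m+n, n)) DD ZZ"
  by (rule bij_betw_byWitness[where f' = "\<lambda>(M,n). (M - n, n)"]) auto

lemma re1:
  fixes G :: "nat \<Rightarrow> nat \<Rightarrow> real"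
  shows "((\<lambda>(m,n). G (m+n) m) summable_on DD \<longleftrightarrow> (\<lambda>(M,m). G M m) summable_on ZZ)
     \<and> infsum (\<lambda>(m,n). G (m+n) m) DD = infsum (\<lambda>(M,m). G M m) ZZ"
proof -
  have e: "(\<lambda>x. (\<lambda>(M,m). G M m) ((\<lambda>(m,n). (m+n, m)) x)) = (\<lambda>(m,n). G (m+n) m)"
    by (auto simp: fun_eq_iff)
  show ?thesis
    using summable_on_reindex_bij_betw[OF bij1, of "\<lambda>(M,m). G M m"]
          infsum_reindex_bij_betw[OF bij1, of "\<lambda>(M,m). G M m"] unfolding e by simp
qed

lemma re2:
  fixes G :: "nat \<Rightarrow> nat \<Rightarrow> real"
  shows "((\<lambda>(m,n). G (m+n) n) summable_on DD \<longleftrightarrow> (\<lambda>(M,m). G M m) summable_on ZZ)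
     \<and> infsum (\<lambda>(m,n). G (m+n) n) DD = infsum (\<lambda>(M,m). G M m) ZZ"
proof -
  have e: "(\<lambda>x. (\<lambda>(M,m). G M m) ((\<lambda>(m,n). (m+n, n)) x)) = (\<lambda>(m,n). G (m+n) n)"
    by (auto simp: fun_eq_iff)
  show ?thesis
    using summable_on_reindex_bij_betw[OF bij2, of "\<lambda>(M,m). G M m"]
          infsum_reindex_bij_betw[OF bij2, of "\<lambda>(M,m). G M m"] unfolding e by simp
qed

lemma sign_eq: "(-1::real) ^ (m + n + m) = (-1) ^ n"
proof -
  have "m + n + m = 2 * m + n" by simp
  then show ?thesis by (simp add: power_add power_mult)
qed

lemma Q_bb:
  assumes "2 \<le> s" "1 \<le> t"
  shows "(\<lambda>(m,n). (-1::real)^n / (real (m+n) ^ s * real m ^ t)) summable_on DD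
       \<and> infsum (\<lambda>(m,n). (-1::real)^n / (real (m+n) ^ s * real m ^ t)) DD = zeta_bb s t"
proof -
  let ?G = "\<lambda>M m. (-1::real)^(M+m) / (real M ^ s * real m ^ t)"
  have f: "(\<lambda>(m,n). (-1::real)^n / (real (m+n) ^ s * real m ^ t)) = (\<lambda>(m,n). ?G (m+n) m)"
    by (auto simp: fun_eq_iff sign_eq)
  have "(\<lambda>(M,m). ?G M m) summable_on ZZ"
    by (rule Z_summable[where e = "\<lambda>M m. (-1)^(M+m)"]) (use assms in auto)
  then show ?thesis unfolding f using re1[of ?G] by (simp add: zeta_bb_def)
qed

lemma Q_ub:
  assumes "2 \<le> s" "1 \<le> t"
  shows "(\<lambda>(m,n). (-1::real)^n / (real (m+n) ^ s * real n ^ t)) summable_on DD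
       \<and> infsum (\<lambda>(m,n). (-1::real)^n / (real (m+n) ^ s * real n ^ t)) DD = zeta_ub s t"
proof -
  let ?G = "\<lambda>M m. (-1::real)^m / (real M ^ s * real m ^ t)"
  have "(\<lambda>(M,m). ?G M m) summable_on ZZ"
    by (rule Z_summable[where e = "\<lambda>M m. (-1)^m"]) (use assms in auto)
  then show ?thesis using re2[of ?G] by (simp add: zeta_ub_def)
qed

lemma Q_bu1:
  assumes "2 \<le> s" "1 \<le> t"
  shows "(\<lambda>(m,n). (-1::real)^(m+n) / (real (m+n) ^ s * real m ^ t)) summable_on DD
       \<and> infsum (\<lambda>(m,n). (-1::real)^(m+n) / (real (m+n) ^ s * real m ^ t)) DD = zeta_bu s t"
proof -
  let ?G = "\<lambda>M m. (-1::real)^M / (real M ^ s * real m ^ t)"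
  have "(\<lambda>(M,m). ?G M m) summable_on ZZ"
    by (rule Z_summable[where e = "\<lambda>M m. (-1)^M"]) (use assms in auto)
  then show ?thesis using re1[of ?G] by (simp add: zeta_bu_def)
qed

lemma Q_bu2:
  assumes "2 \<le> s" "1 \<le> t"
  shows "(\<lambda>(m,n). (-1::real)^(m+n) / (real (m+n) ^ s * real n ^ t)) summable_on DD
       \<and> infsum (\<lambda>(m,n). (-1::real)^(m+n) / (real (m+n) ^ s * real n ^ t)) DD = zeta_bu s t"
proof -
  let ?G = "\<lambda>M m. (-1::real)^M / (real M ^ s * real m ^ t)"
  have "(\<lambda>(M,m). ?G M m) summable_on ZZ"
    by (rule Z_summable[where e = "\<lambda>M m. (-1)^M"]) (use assms in auto)
  then show ?thesis using re2[of ?G] by (simp add: zeta_bu_def)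
qed




lemma infsum_finsum:
  fixes f :: "'i \<Rightarrow> 'a \<Rightarrow> real"
  assumes "finite I" "\<And>i. i \<in> I \<Longrightarrow> f i summable_on A"
  shows "(\<lambda>x. \<Sum>i\<in>I. f i x) summable_on A \<and> infsum (\<lambda>x. \<Sum>i\<in>I. f i x) A = (\<Sum>i\<in>I. infsum (f i) A)"
  using assms
proof (induction I rule: finite_induct)
  case empty then show ?case by simp
next
  case (insert i I)
  then have h: "(\<lambda>x. \<Sum>i\<in>I. f i x) summable_on A" "infsum (\<lambda>x. \<Sum>i\<in>I. f i x) A = (\<Sum>i\<in>I. infsum (f i) A)"
    and fi: "f i summable_on A" by auto
  have e: "(\<lambda>x. \<Sum>j\<in>insert i I. f j x) = (\<lambda>x. f i x + (\<Sum>j\<in>I. f j x))"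
    using insert.hyps by auto
  show ?case unfolding e using insert.hyps h fi
    by (simp add: summable_on_add infsum_add)
qed

lemma term_eq:
  fixes k w e :: real
  assumes "k \<noteq> 0" "w \<noteq> 0"
  shows "e / w ^ r * ((1/k) ^ i * (1/w) ^ j) = e / (w ^ (r + j) * k ^ i)"
  using assms by (simp add: power_add power_one_over field_simps)

lemma decomp:
  fixes m n :: nat and e :: real
  assumes "1 \<le> m" "1 \<le> n" "p + q > 0"
  shows "e / (real m ^ p * real n ^ q * real (m + n) ^ r) =
     (\<Sum>a<p. real ((q + a - 1) choose a) * (e / (real (m+n) ^ (r + q + a) * real m ^ (p - a))))
   + (\<Sum>b<q. real ((p + b - 1) choose b) * (e / (real (m+n) ^ (r + p + b) * real n ^ (q - b))))"
proof -
  let ?x = "1 / real m" and ?y = "1 / real n" and ?z = "1 / real (m + n)"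
  have h: "?x * ?y = ?z * (?x + ?y)" using assms by (simp add: field_simps)
  have pf: "?x ^ p * ?y ^ q = PA ?x ?z p q + PA ?y ?z q p"
    by (rule partial_frac[OF h assms(3)])
  let ?c = "e / real (m + n) ^ r"
  have "e / (real m ^ p * real n ^ q * real (m + n) ^ r) = ?c * (?x ^ p * ?y ^ q)"
    using assms by (simp add: power_one_over field_simps)
  also have "\<dots> = ?c * PA ?x ?z p q + ?c * PA ?y ?z q p" by (simp add: pf algebra_simps)
  also have "?c * PA ?x ?z p q = (\<Sum>a<p. real ((q + a - 1) choose a) * (?c * (?x ^ (p - a) * ?z ^ (q + a))))"
    by (simp add: PA_def sum_distrib_left mult_ac)
  also have "\<dots> = (\<Sum>a<p. real ((q + a - 1) choose a) * (e / (real (m+n) ^ (r + q + a) * real m ^ (p - a))))"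
    using assms by (intro sum.cong refl) (subst term_eq, auto)
  also have "?c * PA ?y ?z q p = (\<Sum>b<q. real ((p + b - 1) choose b) * (?c * (?y ^ (q - b) * ?z ^ (p + b))))"
    by (simp add: PA_def sum_distrib_left mult_ac)
  also have "\<dots> = (\<Sum>b<q. real ((p + b - 1) choose b) * (e / (real (m+n) ^ (r + p + b) * real n ^ (q - b))))"
    using assms by (intro sum.cong refl) (subst term_eq, auto)
  finally show ?thesis .
qed




theorem corollary2:
  fixes p q r :: nat
  assumes "p + q > 0" and "p + r > 1" and "q + r > 1" and "p + q + r > 2"
  shows "R p q r =
           (\<Sum>a<p. real ((q + a - 1) choose a) * zeta_bb (r + q + a) (p - a))
         + (\<Sum>b<q. real ((p + b - 1) choose b) * zeta_ub (r + p + b) (q - b))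
       \<and> S p q r =
           (\<Sum>a<p. real ((q + a - 1) choose a) * zeta_bu (r + q + a) (p - a))
         + (\<Sum>b<q. real ((p + b - 1) choose b) * zeta_bu (r + p + b) (q - b))"
proof
  define fa where "fa = (\<lambda>a x. real ((q + a - 1) choose a) *
      (\<lambda>(m,n). (-1::real)^n / (real (m+n) ^ (r + q + a) * real m ^ (p - a))) x)"
  define fb where "fb = (\<lambda>b x. real ((p + b - 1) choose b) *
      (\<lambda>(m,n). (-1::real)^n / (real (m+n) ^ (r + p + b) * real n ^ (q - b))) x)"
  have sa: "fa a summable_on DD \<and> infsum (fa a) DD = real ((q + a - 1) choose a) * zeta_bb (r + q + a) (p - a)"
    if "a < p" for a
  proof -
    have Q: "(\<lambda>(m,n). (-1::real)^n / (real (m+n) ^ (r + q + a) * real m ^ (p - a))) summable_on DD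
       \<and> infsum (\<lambda>(m,n). (-1::real)^n / (real (m+n) ^ (r + q + a) * real m ^ (p - a))) DD = zeta_bb (r + q + a) (p - a)"
      by (rule Q_bb) (use that assms in auto)
    then show ?thesis unfolding fa_def
      by (simp add: summable_on_cmult_right infsum_cmult_right)
  qed
  have sb: "fb b summable_on DD \<and> infsum (fb b) DD = real ((p + b - 1) choose b) * zeta_ub (r + p + b) (q - b)"
    if "b < q" for b
  proof -
    have Q: "(\<lambda>(m,n). (-1::real)^n / (real (m+n) ^ (r + p + b) * real n ^ (q - b))) summable_on DD
       \<and> infsum (\<lambda>(m,n). (-1::real)^n / (real (m+n) ^ (r + p + b) * real n ^ (q - b))) DD = zeta_ub (r + p + b) (q - b)"
      by (rule Q_ub) (use that assms in auto)
    then show ?thesis unfolding fb_def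
      by (simp add: summable_on_cmult_right infsum_cmult_right)
  qed
  have A: "(\<lambda>x. \<Sum>a<p. fa a x) summable_on DD \<and> infsum (\<lambda>x. \<Sum>a<p. fa a x) DD = (\<Sum>a<p. infsum (fa a) DD)"
    by (rule infsum_finsum) (use sa in auto)
  have B: "(\<lambda>x. \<Sum>b<q. fb b x) summable_on DD \<and> infsum (\<lambda>x. \<Sum>b<q. fb b x) DD = (\<Sum>b<q. infsum (fb b) DD)"
    by (rule infsum_finsum) (use sb in auto)
  have "R p q r = infsum (\<lambda>x. (\<Sum>a<p. fa a x) + (\<Sum>b<q. fb b x)) DD"
    unfolding R_def
  proof (rule infsum_cong)
    fix x assume "x \<in> DD"
    then obtain m n where x: "x = (m,n)" "1 \<le> m" "1 \<le> n" by auto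
    show "(case x of (m, n) \<Rightarrow> (- 1) ^ n / (real m ^ p * real n ^ q * real (m + n) ^ r)) =
          (\<Sum>a<p. fa a x) + (\<Sum>b<q. fb b x)"
      unfolding x(1) fa_def fb_def using decomp[OF x(2,3) assms(1)] by simp
  qed
  also have "\<dots> = infsum (\<lambda>x. \<Sum>a<p. fa a x) DD + infsum (\<lambda>x. \<Sum>b<q. fb b x) DD"
    using A B by (intro infsum_add) auto
  also have "\<dots> = (\<Sum>a<p. real ((q + a - 1) choose a) * zeta_bb (r + q + a) (p - a))
         + (\<Sum>b<q. real ((p + b - 1) choose b) * zeta_ub (r + p + b) (q - b))"
    using A B sa sb by simp
  finally show "R p q r = (\<Sum>a<p. real ((q + a - 1) choose a) * zeta_bb (r + q + a) (p - a))
         + (\<Sum>b<q. real ((p + b - 1) choose b) * zeta_ub (r + p + b) (q - b))" .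
next
  define fa where "fa = (\<lambda>a x. real ((q + a - 1) choose a) *
      (\<lambda>(m,n). (-1::real)^(m+n) / (real (m+n) ^ (r + q + a) * real m ^ (p - a))) x)"
  define fb where "fb = (\<lambda>b x. real ((p + b - 1) choose b) *
      (\<lambda>(m,n). (-1::real)^(m+n) / (real (m+n) ^ (r + p + b) * real n ^ (q - b))) x)"
  have sa: "fa a summable_on DD \<and> infsum (fa a) DD = real ((q + a - 1) choose a) * zeta_bu (r + q + a) (p - a)"
    if "a < p" for a
  proof -
    have Q: "(\<lambda>(m,n). (-1::real)^(m+n) / (real (m+n) ^ (r + q + a) * real m ^ (p - a))) summable_on DD
       \<and> infsum (\<lambda>(m,n). (-1::real)^(m+n) / (real (m+n) ^ (r + q + a) * real m ^ (p - a))) DD = zeta_bu (r + q + a) (p - a)"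
      by (rule Q_bu1) (use that assms in auto)
    then show ?thesis unfolding fa_def
      by (simp add: summable_on_cmult_right infsum_cmult_right)
  qed
  have sb: "fb b summable_on DD \<and> infsum (fb b) DD = real ((p + b - 1) choose b) * zeta_bu (r + p + b) (q - b)"
    if "b < q" for b
  proof -
    have Q: "(\<lambda>(m,n). (-1::real)^(m+n) / (real (m+n) ^ (r + p + b) * real n ^ (q - b))) summable_on DD
       \<and> infsum (\<lambda>(m,n). (-1::real)^(m+n) / (real (m+n) ^ (r + p + b) * real n ^ (q - b))) DD = zeta_bu (r + p + b) (q - b)"
      by (rule Q_bu2) (use that assms in auto)
    then show ?thesis unfolding fb_def
      by (simp add: summable_on_cmult_right infsum_cmult_right)
  qed
  have A: "(\<lambda>x. \<Sum>a<p. fa a x) summable_on DD \<and> infsum (\<lambda>x. \<Sum>a<p. fa a x) DD = (\<Sum>a<p. infsum (fa a) DD)"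
    by (rule infsum_finsum) (use sa in auto)
  have B: "(\<lambda>x. \<Sum>b<q. fb b x) summable_on DD \<and> infsum (\<lambda>x. \<Sum>b<q. fb b x) DD = (\<Sum>b<q. infsum (fb b) DD)"
    by (rule infsum_finsum) (use sb in auto)
  have "S p q r = infsum (\<lambda>x. (\<Sum>a<p. fa a x) + (\<Sum>b<q. fb b x)) DD"
    unfolding S_def
  proof (rule infsum_cong)
    fix x assume "x \<in> DD"
    then obtain m n where x: "x = (m,n)" "1 \<le> m" "1 \<le> n" by auto
    show "(case x of (m, n) \<Rightarrow> (- 1) ^ (m + n) / (real m ^ p * real n ^ q * real (m + n) ^ r)) =
          (\<Sum>a<p. fa a x) + (\<Sum>b<q. fb b x)"
      unfolding x(1) fa_def fb_def using decomp[OF x(2,3) assms(1)] by simp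
  qed
  also have "\<dots> = infsum (\<lambda>x. \<Sum>a<p. fa a x) DD + infsum (\<lambda>x. \<Sum>b<q. fb b x) DD"
    using A B by (intro infsum_add) auto
  also have "\<dots> = (\<Sum>a<p. real ((q + a - 1) choose a) * zeta_bu (r + q + a) (p - a))
         + (\<Sum>b<q. real ((p + b - 1) choose b) * zeta_bu (r + p + b) (q - b))"
    using A B sa sb by simp
  finally show "S p q r = (\<Sum>a<p. real ((q + a - 1) choose a) * zeta_bu (r + q + a) (p - a))
         + (\<Sum>b<q. real ((p + b - 1) choose b) * zeta_bu (r + p + b) (q - b))" .
qed


end
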